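(* Let $\psi:\mathbb{R}\times\mathbb{Z}\to\mathbb{C}$ solve the lattice nonlinear Schrödinger equation $$i\,\partial_t\psi(t,x)=-\Delta\psi(t,x)+|\psi(t,x)|^2\psi(t,x),\qquad x\in\mathbb{Z},$$ where $\Delta f(x)=f(x+1)+f(x-1)-2f(x)$, with initial data satisfying $|\psi(0,x)|\le A$ for all $x\in\mathbb{Z}$. Then there exists a constant $C$ such that for every $x_0\in\mathbb{Z}$ and every $t_0\ge 1$, $$|\psi(t_0,x_0)|\le C A\, t_0^{1/2},\qquad\text{and}\qquad \frac{1}{t_0}\sum_{x\in\mathbb{Z},\,|x-x_0|\le t_0}|\psi(t_0,x)|^2\le C A^2 .$$
   Context: $\Delta=-\partial^*\partial$ is the finite-difference Laplacian on $\mathbb{Z}$, with $\partial f(x)=f(x+1)-f(x)$ and $\partial^*f(x)=f(x-1)-f(x)$. The solution is understood as a global-in-time solution with values in $\ell^\infty(\mathbb{Z})$. *)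

theory Defs
  imports "HOL-Analysis.Analysis"
begin

definition lattice_laplacian :: "(int \<Rightarrow> complex) \<Rightarrow> int \<Rightarrow> complex" where
  "lattice_laplacian f x = f (x + 1) + f (x - 1) - 2 * f x"

definition lattice_nls_solution :: "(real \<Rightarrow> int \<Rightarrow> complex) \<Rightarrow> bool" where
  "lattice_nls_solution \<psi> \<longleftrightarrow>
     (\<forall>T. \<exists>M. \<forall>t x. \<bar>t\<bar> \<le> T \<longrightarrow> cmod (\<psi> t x) \<le> M) \<and>
     (\<forall>t x. ((\<lambda>s. \<psi> s x) has_vector_derivative
         (- \<i>) * (- lattice_laplacian (\<psi> t) x
                  + complex_of_real ((cmod (\<psi> t x))\<^sup>2) * \<psi> t x)) (at t))"

end

theory Submission
  imports Defs
begin
lemma flux: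
  fixes a b c :: complex
  shows "2 * Re (cnj b * (- \<i> * (- (c + a - 2*b) + complex_of_real ((cmod b)^2) * b)))
     = 2 * Im (cnj a * b) - 2 * Im (cnj b * c)"
  by (simp add: algebra_simps cmod_power2 power2_eq_square)

lemma exp_sub1: fixes d :: real shows "\<bar>exp d - 1\<bar> \<le> \<bar>d\<bar> * exp \<bar>d\<bar>"
proof (cases "d \<ge> 0")
  case True
  have "exp (-d) \<ge> 1 - d" using exp_ge_add_one_self[of "-d"] by simp
  hence "exp (-d) * exp d \<ge> (1 - d) * exp d" by (simp add: mult_right_mono)
  hence "1 \<ge> (1 - d) * exp d" by (simp add: exp_minus field_simps)
  moreover have "exp d \<ge> 1" using True by simp
  ultimately show ?thesis using True by (simp add: algebra_simps)
next
  case False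
  have "exp d \<ge> 1 + d" using exp_ge_add_one_self[of d] by simp
  moreover have "exp d \<le> 1" using False by simp
  moreover have "exp \<bar>d\<bar> \<ge> 1" by simp
  moreover have "\<bar>exp d - 1\<bar> = 1 - exp d" using \<open>exp d \<le> 1\<close> by simp
  ultimately have "\<bar>exp d - 1\<bar> \<le> \<bar>d\<bar>" using False by linarith
  also have "\<dots> \<le> \<bar>d\<bar> * exp \<bar>d\<bar>" using \<open>exp \<bar>d\<bar> \<ge> 1\<close> by (simp add: mult_le_cancel_left1)
  finally show ?thesis .
qed

lemma weight_diff:
  fixes \<alpha> \<beta> R :: real
  assumes "R \<ge> 1" "\<bar>\<alpha> - \<beta>\<bar> \<le> 1"
  shows "\<bar>exp (-\<beta>/R) - exp (-\<alpha>/R)\<bar> \<le> exp 1 / R * exp (-\<alpha>/R)"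
proof -
  define d where "d = (\<alpha> - \<beta>)/R"
  have R0: "R > 0" using assms by simp
  have dd: "\<bar>d\<bar> \<le> 1/R" using assms R0 by (simp add: d_def abs_divide divide_right_mono)
  have "1/R \<le> 1" using assms by simp
  have "-\<beta>/R = -\<alpha>/R + d" by (simp add: d_def diff_divide_distrib)
  hence e: "exp (-\<beta>/R) = exp (-\<alpha>/R) * exp d" by (metis exp_add)
  have "\<bar>exp d - 1\<bar> \<le> \<bar>d\<bar> * exp \<bar>d\<bar>" by (rule exp_sub1)
  also have "\<dots> \<le> (1/R) * exp 1"
    apply (rule mult_mono) using dd \<open>1/R \<le> 1\<close> R0 by (auto intro: order_trans)
  finally have "\<bar>exp d - 1\<bar> \<le> exp 1 / R" by simp
  hence "exp (-\<alpha>/R) * \<bar>exp d - 1\<bar> \<le> exp (-\<alpha>/R) * (exp 1 / R)" by (rule mult_left_mono) simp_all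
  moreover have "exp (-\<alpha>/R) * \<bar>exp d - 1\<bar> = \<bar>exp (-\<beta>/R) - exp (-\<alpha>/R)\<bar>"
    unfolding e by (metis abs_mult abs_of_pos exp_gt_zero mult.right_neutral right_diff_distrib)
  ultimately show ?thesis by (simp add: mult.commute)
qed

lemma shift_sum_int:
  fixes f :: "int \<Rightarrow> real"
  shows "sum f {a..b} = sum (\<lambda>y. f (y+1)) {a-1..b-1}"
  by (rule sum.reindex_bij_witness[of _ "\<lambda>y. y+1" "\<lambda>x. x-1"]) auto

lemma split_last_int:
  fixes f :: "int \<Rightarrow> real"
  assumes "a \<le> b"
  shows "sum f {a..b} = f b + sum f {a..b-1}"
proof -
  have "{a..b} = insert b {a..b-1}" using assms by auto
  thus ?thesis by simp
qed

lemma split_first_int: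
  fixes f :: "int \<Rightarrow> real"
  assumes "a \<le> b"
  shows "sum f {a..b} = f a + sum f {a+1..b}"
proof -
  have "{a..b} = insert a {a+1..b}" using assms by auto
  thus ?thesis by simp
qed
lemma wsum:
  fixes t0 :: real and x0 :: int and N :: nat
  assumes t0: "t0 \<ge> 1"
  shows "(\<Sum>x\<in>{x0 - int N..x0 + int N}. exp (-\<bar>real_of_int (x-x0)\<bar>/t0)) \<le> 4*t0"
proof -
  define f where "f x = exp (-\<bar>real_of_int (x-x0)\<bar>/t0)" for x
  define q where "q = exp (-1/t0)"
  define U1 where "U1 = (\<lambda>k. x0 + int k) ` {..<Suc N}"
  define U2 where "U2 = (\<lambda>k. x0 - int k) ` {..<Suc N}"
  have t0pos: "t0 > 0" using t0 by simp
  have fpos: "0 \<le> f x" for x by (simp add: f_def)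
  have sub: "{x0 - int N..x0 + int N} \<subseteq> U1 \<union> U2"
  proof
    fix x assume x: "x \<in> {x0 - int N..x0 + int N}"
    show "x \<in> U1 \<union> U2"
    proof (cases "x \<ge> x0")
      case True
      hence "x = x0 + int (nat (x - x0))" "nat (x - x0) < Suc N" using x by auto
      thus ?thesis unfolding U1_def by blast
    next
      case False
      hence "x = x0 - int (nat (x0 - x))" "nat (x0 - x) < Suc N" using x by auto
      thus ?thesis unfolding U2_def by blast
    qed
  qed
  have fin: "finite U1" "finite U2" by (simp_all add: U1_def U2_def)
  have fk1: "f (x0 + int k) = q ^ k" for k
    using exp_of_nat_mult[of k "-1/t0"] by (simp add: f_def q_def)
  have fk2: "f (x0 - int k) = q ^ k" for k
    using exp_of_nat_mult[of k "-1/t0"] by (simp add: f_def q_def)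
  have q1: "q < 1" "0 < q" using t0pos by (simp_all add: q_def)
  have "exp (1/t0) \<ge> 1 + 1/t0" by (rule exp_ge_add_one_self)
  hence "inverse (exp (1/t0)) \<le> inverse (1 + 1/t0)"
    by (rule le_imp_inverse_le) (use t0pos in \<open>simp add: add_pos_pos\<close>)
  hence "q \<le> 1 / (1 + 1/t0)" unfolding q_def
    by (simp add: exp_minus divide_inverse)
  also have "1 / (1 + 1/t0) = t0 / (t0 + 1)" using t0pos by (simp add: field_simps)
  finally have "q \<le> t0 / (t0 + 1)" .
  hence "1 - q \<ge> 1 / (t0 + 1)" using t0pos by (simp add: field_simps)
  hence iq: "1 / (1 - q) \<le> t0 + 1" using q1 t0pos by (simp add: field_simps)
  have geo: "(\<Sum>k<Suc N. q ^ k) \<le> t0 + 1"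
  proof -
    have "(\<Sum>k<Suc N. q ^ k) = (1 - q ^ Suc N) / (1 - q)"
      apply (simp only: sum_gp_strict) using q1 by simp
    also have "\<dots> \<le> 1 / (1 - q)" using q1 by (intro divide_right_mono) simp_all
    finally show ?thesis using iq by simp
  qed
  have "sum f {x0 - int N..x0 + int N} \<le> sum f (U1 \<union> U2)"
    by (rule sum_mono2) (use fin sub fpos in auto)
  also have "\<dots> \<le> sum f U1 + sum f U2"
    using sum.union_inter[OF fin, of f] sum_nonneg[of "U1 \<inter> U2" f] fpos by simp
  also have "sum f U1 \<le> (\<Sum>k<Suc N. q ^ k)"
    unfolding U1_def by (rule order_trans[OF sum_image_le]) (use q1 in \<open>auto simp: fk1 fpos o_def\<close>)
  also have "sum f U2 \<le> (\<Sum>k<Suc N. q ^ k)"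
    unfolding U2_def by (rule order_trans[OF sum_image_le]) (use q1 in \<open>auto simp: fk2 fpos o_def\<close>)
  finally show ?thesis using geo t0 unfolding f_def by simp
qed
lemma deriv_sq:
  fixes f :: "real \<Rightarrow> complex"
  assumes "(f has_vector_derivative D) (at t)"
  shows "((\<lambda>s. (cmod (f s))^2) has_real_derivative 2 * Re (cnj (f t) * D)) (at t)"
proof -
  have 1: "((\<lambda>s. f s * cnj (f s)) has_vector_derivative (f t * cnj D + D * cnj (f t))) (at t)"
    using bounded_bilinear.has_vector_derivative[OF bounded_bilinear_mult assms has_vector_derivative_cnj[OF assms]] by simp
  have 2: "((\<lambda>s. Re (f s * cnj (f s))) has_vector_derivative Re (f t * cnj D + D * cnj (f t))) (at t)"
    using bounded_linear.has_vector_derivative[OF bounded_linear_Re 1] .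
  have e1: "(\<lambda>s. Re (f s * cnj (f s))) = (\<lambda>s. (cmod (f s))^2)"
    by (simp add: complex_mult_cnj cmod_power2)
  have e2: "Re (f t * cnj D + D * cnj (f t)) = 2 * Re (cnj (f t) * D)"
    by simp
  show ?thesis using 2 unfolding e1 e2 by (simp add: has_real_derivative_iff_has_vector_derivative)
qed

lemma main_bound:
  fixes \<psi> :: "real \<Rightarrow> int \<Rightarrow> complex" and t0 K A :: real and x0 :: int and N :: nat
  assumes sol: "\<And>t x. ((\<lambda>s. \<psi> s x) has_vector_derivative (- \<i>) * (- lattice_laplacian (\<psi> t) x
                  + complex_of_real ((cmod (\<psi> t x))\<^sup>2) * \<psi> t x)) (at t)"
  and Kb: "\<And>s x. 0 \<le> s \<Longrightarrow> s \<le> t0 \<Longrightarrow> cmod (\<psi> s x) \<le> K"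
  and init: "\<And>x. cmod (\<psi> 0 x) \<le> A"
  and t0: "t0 \<ge> 1"
  shows "(\<Sum>x\<in>{x0 - int N..x0 + int N}. exp (-\<bar>real_of_int (x-x0)\<bar>/t0) * (cmod (\<psi> t0 x))\<^sup>2)
     \<le> exp (2*exp 1) * (4*A\<^sup>2*t0 + 4*exp(-real N/t0)*K\<^sup>2*t0)"
proof -
  define w where "w x = exp(-\<bar>real_of_int (x-x0)\<bar>/t0)" for x
  define a where "a = x0 - int N"
  define b where "b = x0 + int N"
  define M where "M = (\<lambda>s. \<Sum>x\<in>{a..b}. w x * (cmod (\<psi> s x))\<^sup>2)"
  define J where "J s y = Im (cnj (\<psi> s y) * \<psi> s (y+1))" for s y
  define D where "D s = (\<Sum>x\<in>{a..b}. w x * (2*J s (x-1) - 2*J s x))" for s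
  define L where "L = 2*exp 1/t0"
  define B where "B = 4*exp(-real N/t0)*K\<^sup>2"
  have t0pos: "t0 > 0" using t0 by simp
  have ab: "a \<le> b" by (simp add: a_def b_def)
  have wpos: "w x > 0" for x by (simp add: w_def)
  have dsq: "((\<lambda>s. (cmod (\<psi> s x))\<^sup>2) has_real_derivative (2*J s (x-1) - 2*J s x)) (at s)" for s x
  proof -
    have "((\<lambda>s. (cmod (\<psi> s x))\<^sup>2) has_real_derivative 2 * Re (cnj (\<psi> s x) * ((- \<i>) * (- lattice_laplacian (\<psi> s) x
                  + complex_of_real ((cmod (\<psi> s x))\<^sup>2) * \<psi> s x)))) (at s)"
      by (rule deriv_sq[OF sol])
    also have "2 * Re (cnj (\<psi> s x) * ((- \<i>) * (- lattice_laplacian (\<psi> s) x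
                  + complex_of_real ((cmod (\<psi> s x))\<^sup>2) * \<psi> s x))) = 2*J s (x-1) - 2*J s x"
      unfolding lattice_laplacian_def J_def
      using flux[where a="\<psi> s (x-1)" and b="\<psi> s x" and c="\<psi> s (x+1)"] by simp
    finally show ?thesis .
  qed
  have dM: "(M has_real_derivative D s) (at s)" for s
    unfolding M_def D_def by (intro DERIV_sum DERIV_cmult dsq)
  have Dbound: "D s \<le> L * M s + B" if s0: "0 \<le> s" "s \<le> t0" for s
  proof -
    define u where "u y = cmod (\<psi> s y)" for y
    have unn: "0 \<le> u y" for y by (simp add: u_def)
    have Jb: "\<bar>J s y\<bar> \<le> u y * u (y+1)" for y
      unfolding J_def u_def using abs_Im_le_cmod[of "cnj (\<psi> s y) * \<psi> s (y+1)"] by (simp add: norm_mult)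
    have JK: "\<bar>J s y\<bar> \<le> K\<^sup>2" for y
    proof -
      have "u y * u (y+1) \<le> K * K"
        using Kb[OF s0, of y] Kb[OF s0, of "y+1"] unn[of y] unn[of "y+1"]
        by (intro mult_mono) (auto simp: u_def intro: order_trans[OF norm_ge_zero])
      thus ?thesis using Jb[of y] by (simp add: power2_eq_square)
    qed
    have S1: "(\<Sum>x\<in>{a..b}. w x * J s (x-1)) = w a * J s (a-1) + (\<Sum>y\<in>{a..b-1}. w (y+1) * J s y)"
      using shift_sum_int[of "\<lambda>x. w x * J s (x-1)" a b] split_first_int[of "a-1" "b-1"] ab by simp
    have S2: "(\<Sum>x\<in>{a..b}. w x * J s x) = w b * J s b + (\<Sum>y\<in>{a..b-1}. w y * J s y)"
      using split_last_int ab by simp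
    have D1: "D s = 2*(\<Sum>x\<in>{a..b}. w x * J s (x-1)) - 2*(\<Sum>x\<in>{a..b}. w x * J s x)"
      unfolding D_def by (simp add: sum_subtractf sum_distrib_left algebra_simps)
    have D2: "(\<Sum>y\<in>{a..b-1}. 2*((w (y+1) - w y) * J s y))
       = 2*(\<Sum>y\<in>{a..b-1}. w (y+1) * J s y) - 2*(\<Sum>y\<in>{a..b-1}. w y * J s y)"
      by (simp add: sum_subtractf sum_distrib_left algebra_simps)
    have DS: "D s = (2*(w a * J s (a-1)) - 2*(w b * J s b)) + (\<Sum>y\<in>{a..b-1}. 2*((w (y+1) - w y) * J s y))"
      unfolding D1 D2 S1 S2 by (simp add: algebra_simps)
    have wab: "w a = exp(-real N/t0)" "w b = exp(-real N/t0)" by (simp_all add: w_def a_def b_def)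
    have bd: "2*(w a * J s (a-1)) - 2*(w b * J s b) \<le> B"
    proof -
      have "w a * J s (a-1) \<le> exp(-real N/t0) * K\<^sup>2"
        unfolding wab using JK[of "a-1"] by (intro mult_left_mono) auto
      moreover have "- (w b * J s b) \<le> exp(-real N/t0) * K\<^sup>2"
      proof -
        have "exp(-real N/t0) * (- J s b) \<le> exp(-real N/t0) * K\<^sup>2"
          using JK[of b] by (intro mult_left_mono) auto
        thus ?thesis unfolding wab by simp
      qed
      ultimately show ?thesis by (simp add: B_def)
    qed
    define c where "c = exp 1 / t0"
    have cL: "L = 2*c" by (simp add: L_def c_def)
    have inter: "2*((w (y+1) - w y) * J s y) \<le> c * (w y * (u y)\<^sup>2) + c * (w (y+1) * (u (y+1))\<^sup>2)" for y
    proof -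
      define m where "m = \<bar>w (y+1) - w y\<bar>"
      have m1: "m \<le> c * w y" unfolding m_def w_def c_def
        by (rule weight_diff) (use t0 in auto)
      have m2: "m \<le> c * w (y+1)" unfolding m_def w_def c_def
        by (subst abs_minus_commute, rule weight_diff) (use t0 in auto)
      have mnn: "0 \<le> m" by (simp add: m_def)
      have "2*((w (y+1) - w y) * J s y) \<le> 2 * (m * (u y * u (y+1)))"
      proof -
        have "(w (y+1) - w y) * J s y \<le> m * \<bar>J s y\<bar>"
          unfolding m_def by (metis abs_ge_self abs_mult)
        also have "\<dots> \<le> m * (u y * u (y+1))" using Jb[of y] mnn by (rule mult_left_mono)
        finally show ?thesis by simp
      qed
      also have "\<dots> \<le> m * ((u y)\<^sup>2 + (u (y+1))\<^sup>2)"
      proof -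
        have "2 * (u y * u (y+1)) \<le> (u y)\<^sup>2 + (u (y+1))\<^sup>2"
          using zero_le_power2[of "u y - u (y+1)"] unfolding power2_diff by (simp add: algebra_simps)
        from mult_left_mono[OF this mnn] show ?thesis by (simp add: algebra_simps)
      qed
      also have "\<dots> = m * (u y)\<^sup>2 + m * (u (y+1))\<^sup>2" by (simp add: algebra_simps)
      also have "\<dots> \<le> c * w y * (u y)\<^sup>2 + c * w (y+1) * (u (y+1))\<^sup>2"
        by (intro add_mono mult_right_mono m1 m2) auto
      finally show ?thesis by (simp add: mult.assoc)
    qed
    have Mnn: "0 \<le> w y * (u y)\<^sup>2" for y using wpos[of y] by simp
    have Ms: "M s = (\<Sum>x\<in>{a..b}. w x * (u x)\<^sup>2)" by (simp add: M_def u_def)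
    have P1: "(\<Sum>y\<in>{a..b-1}. w y * (u y)\<^sup>2) \<le> M s"
      unfolding Ms by (rule sum_mono2) (auto simp: Mnn)
    have P2: "(\<Sum>y\<in>{a..b-1}. w (y+1) * (u (y+1))\<^sup>2) \<le> M s"
    proof -
      have "(\<Sum>y\<in>{a..b-1}. w (y+1) * (u (y+1))\<^sup>2) = (\<Sum>x\<in>{a+1..b}. w x * (u x)\<^sup>2)"
        using shift_sum_int[of "\<lambda>x. w x * (u x)\<^sup>2" "a+1" b] by simp
      also have "\<dots> \<le> M s"
        unfolding Ms by (rule sum_mono2) (auto simp: Mnn)
      finally show ?thesis .
    qed
    have "(\<Sum>y\<in>{a..b-1}. 2*((w (y+1) - w y) * J s y))
        \<le> (\<Sum>y\<in>{a..b-1}. c * (w y * (u y)\<^sup>2) + c * (w (y+1) * (u (y+1))\<^sup>2))"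
      by (rule sum_mono) (rule inter)
    also have "\<dots> = c * (\<Sum>y\<in>{a..b-1}. w y * (u y)\<^sup>2) + c * (\<Sum>y\<in>{a..b-1}. w (y+1) * (u (y+1))\<^sup>2)"
      by (simp add: sum.distrib sum_distrib_left)
    also have "\<dots> \<le> c * M s + c * M s"
      using P1 P2 t0pos by (intro add_mono mult_left_mono) (auto simp: c_def)
    finally have "(\<Sum>y\<in>{a..b-1}. 2*((w (y+1) - w y) * J s y)) \<le> L * M s" by (simp add: cL)
    thus ?thesis unfolding DS using bd by simp
  qed
  define g where "g = (\<lambda>s. exp (- L * s) * M s - B * s)"
  have Lpos: "L > 0" using t0pos by (simp add: L_def)
  have Bnn: "B \<ge> 0" by (simp add: B_def)
  have "g t0 \<le> g 0"
  proof (rule DERIV_nonpos_imp_nonincreasing[of 0 t0 g])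
    show "0 \<le> t0" using t0 by simp
    fix x assume x: "0 \<le> x" "x \<le> t0"
    have "(g has_real_derivative (exp(-L*x) * (-L)) * M x + D x * exp(-L*x) - B) (at x)"
      unfolding g_def by (auto intro!: derivative_eq_intros dM)
    moreover have "(exp(-L*x) * (-L)) * M x + D x * exp(-L*x) - B \<le> 0"
    proof -
      have e: "exp(-L*x) \<le> 1" "exp(-L*x) > 0" using x Lpos by simp_all
      have "(exp(-L*x) * (-L)) * M x + D x * exp(-L*x) - B = exp(-L*x) * (D x - L * M x) - B"
        by (simp add: algebra_simps)
      also have "\<dots> \<le> exp(-L*x) * B - B"
        using Dbound[OF x] e by (intro diff_right_mono mult_left_mono) auto
      also have "\<dots> \<le> 0" using mult_right_mono[OF e(1) Bnn] by simp
      finally show ?thesis .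
    qed
    ultimately show "\<exists>y. (g has_real_derivative y) (at x) \<and> y \<le> 0" by blast
  qed
  hence "exp(-L*t0) * M t0 \<le> M 0 + B*t0" by (simp add: g_def)
  hence "exp(L*t0) * (exp(-L*t0) * M t0) \<le> exp(L*t0) * (M 0 + B*t0)" by (simp add: mult_left_mono)
  hence Mt0: "M t0 \<le> exp (2*exp 1) * (M 0 + B*t0)"
    using t0pos by (simp add: L_def exp_minus field_simps)
  have "M 0 \<le> (\<Sum>x\<in>{a..b}. w x * A\<^sup>2)"
    unfolding M_def
  proof (rule sum_mono)
    fix x
    have "(cmod (\<psi> 0 x))\<^sup>2 \<le> A\<^sup>2" using init[of x] by (intro power_mono) auto
    thus "w x * (cmod (\<psi> 0 x))\<^sup>2 \<le> w x * A\<^sup>2" using wpos[of x] by (simp add: mult_left_mono)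
  qed
  also have "\<dots> = A\<^sup>2 * (\<Sum>x\<in>{a..b}. w x)" by (simp add: sum_distrib_right mult.commute)
  also have "\<dots> \<le> A\<^sup>2 * (4*t0)"
    using wsum[OF t0, of x0 N] unfolding a_def b_def w_def by (intro mult_left_mono) auto
  finally have M0: "M 0 \<le> 4*A\<^sup>2*t0" by simp
  have "M t0 \<le> exp (2*exp 1) * (4*A\<^sup>2*t0 + B*t0)"
    by (rule order_trans[OF Mt0 mult_left_mono[OF add_right_mono[OF M0]]]) simp
  thus ?thesis by (simp add: M_def w_def a_def b_def B_def)
qed

theorem proposition2:
  shows "\<exists>C::real. \<forall>(A::real) (\<psi>::real \<Rightarrow> int \<Rightarrow> complex).
     lattice_nls_solution \<psi> \<and> (\<forall>x. cmod (\<psi> 0 x) \<le> A) \<longrightarrow>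
     (\<forall>x0::int. \<forall>t0::real. t0 \<ge> 1 \<longrightarrow>
        cmod (\<psi> t0 x0) \<le> C * A * sqrt t0 \<and>
        (1 / t0) * (\<Sum>x\<in>{x::int. \<bar>real_of_int (x - x0)\<bar> \<le> t0}. (cmod (\<psi> t0 x))\<^sup>2)
          \<le> C * A\<^sup>2)"
proof (intro exI[of _ "4*exp(2*exp 1 + 1)"] allI impI)
  fix A :: real and \<psi> :: "real \<Rightarrow> int \<Rightarrow> complex" and x0 :: int and t0 :: real
  assume H: "lattice_nls_solution \<psi> \<and> (\<forall>x. cmod (\<psi> 0 x) \<le> A)"
  assume t0: "t0 \<ge> 1"
  define C :: real where "C = 4*exp(2*exp 1 + 1)"
  have t0pos: "t0 > 0" using t0 by simp
  have init: "\<And>x. cmod (\<psi> 0 x) \<le> A" using H by blast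
  have sol: "\<And>t x. ((\<lambda>s. \<psi> s x) has_vector_derivative (- \<i>) * (- lattice_laplacian (\<psi> t) x
                  + complex_of_real ((cmod (\<psi> t x))\<^sup>2) * \<psi> t x)) (at t)"
    using H unfolding lattice_nls_solution_def by blast
  obtain K where K: "\<forall>t x. \<bar>t\<bar> \<le> t0 \<longrightarrow> cmod (\<psi> t x) \<le> K"
    using H unfolding lattice_nls_solution_def by blast
  have Kb: "\<And>s x. 0 \<le> s \<Longrightarrow> s \<le> t0 \<Longrightarrow> cmod (\<psi> s x) \<le> K" using K by auto
  have A0: "0 \<le> A" using init[of 0] norm_ge_zero order_trans by blast
  define Ec :: real where "Ec = exp (2*exp 1)"
  define Y where "Y = Ec * (4*A\<^sup>2*t0)"
  define F where "F N = Ec * (4*A\<^sup>2*t0 + 4*exp(-real N/t0)*K\<^sup>2*t0)" for N :: nat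
  define w where "w x = exp (-\<bar>real_of_int (x-x0)\<bar>/t0)" for x
  define Ms where "Ms N = (\<Sum>x\<in>{x0 - int N..x0 + int N}. w x * (cmod (\<psi> t0 x))\<^sup>2)" for N :: nat
  have MF: "Ms N \<le> F N" for N
    unfolding Ms_def F_def Ec_def w_def by (rule main_bound[OF sol Kb init t0])
  have FY: "F \<longlonglongrightarrow> Y"
  proof -
    define q where "q = exp (-1/t0)"
    have q: "\<bar>q\<bar> < 1" using t0pos by (simp add: q_def)
    have eq: "exp(-real N/t0) = q ^ N" for N
      using exp_of_nat_mult[of N "-1/t0"] by (simp add: q_def)
    have "(\<lambda>N. Ec * (4*A\<^sup>2*t0 + 4*q^N*K\<^sup>2*t0)) \<longlonglongrightarrow> Ec * (4*A\<^sup>2*t0 + 4*0*K\<^sup>2*t0)"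
      by (intro tendsto_intros LIMSEQ_power_zero) (use q in simp)
    thus ?thesis unfolding F_def Y_def eq by simp
  qed
  have wnn: "0 \<le> w x" for x by (simp add: w_def)
  have part1: "(cmod (\<psi> t0 x0))\<^sup>2 \<le> Y"
  proof (rule LIMSEQ_le_const[OF FY], intro exI allI impI)
    fix N :: nat
    have "(cmod (\<psi> t0 x0))\<^sup>2 = w x0 * (cmod (\<psi> t0 x0))\<^sup>2" by (simp add: w_def)
    also have "\<dots> \<le> Ms N" unfolding Ms_def
      by (rule member_le_sum) (auto simp: wnn)
    also have "\<dots> \<le> F N" by (rule MF)
    finally show "(cmod (\<psi> t0 x0))\<^sup>2 \<le> F N" .
  qed
  have "(cmod (\<psi> t0 x0))\<^sup>2 \<le> (C * A * sqrt t0)\<^sup>2"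
  proof -
    have "Ec \<le> exp(2*exp 1 + 1)" by (simp add: Ec_def)
    also have "\<dots> \<le> exp(2*exp 1 + 1) * exp(2*exp 1 + 1)" by simp
    finally have "Ec \<le> exp(2*exp 1 + 1) * exp(2*exp 1 + 1)" .
    moreover have "0 \<le> exp(2*exp 1 + 1) * exp(2*exp 1 + (1::real))" by simp
    ultimately have "4 * Ec \<le> 16 * (exp(2*exp 1 + 1) * exp(2*exp 1 + 1))" by linarith
    also have "\<dots> = C\<^sup>2" unfolding C_def power2_eq_square by (simp add: algebra_simps)
    finally have "4 * Ec \<le> C\<^sup>2" .
    hence "Y \<le> C\<^sup>2 * (A\<^sup>2 * t0)" unfolding Y_def using A0 t0pos
      by (metis mult.assoc mult.left_commute mult_nonneg_nonneg mult_right_mono less_imp_le zero_le_power2)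
    also have "\<dots> = (C * A * sqrt t0)\<^sup>2" using t0pos by (simp add: power_mult_distrib)
    finally show ?thesis using part1 by simp
  qed
  hence P1: "cmod (\<psi> t0 x0) \<le> C * A * sqrt t0"
    by (rule power2_le_imp_le) (use A0 t0pos in \<open>simp add: C_def\<close>)
  define Set where "Set = {x::int. \<bar>real_of_int (x - x0)\<bar> \<le> t0}"
  define S where "S = (\<Sum>x\<in>Set. (cmod (\<psi> t0 x))\<^sup>2)"
  have "S / exp 1 \<le> Y"
  proof (rule LIMSEQ_le_const[OF FY], intro exI allI impI)
    fix N :: nat assume N: "nat \<lceil>t0\<rceil> \<le> N"
    have sub: "Set \<subseteq> {x0 - int N..x0 + int N}"
    proof
      fix x assume "x \<in> Set"
      hence "\<bar>real_of_int (x - x0)\<bar> \<le> t0" by (simp add: Set_def)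
      hence "real_of_int \<bar>x - x0\<bar> \<le> t0" by simp
      hence "\<bar>x - x0\<bar> \<le> \<lceil>t0\<rceil>" by (simp add: le_ceiling_iff)
      moreover have "\<lceil>t0\<rceil> \<le> int N" using N t0pos by linarith
      ultimately show "x \<in> {x0 - int N..x0 + int N}" by auto
    qed
    have fin: "finite {x0 - int N..x0 + int N}" by simp
    have "S \<le> (\<Sum>x\<in>Set. exp 1 * (w x * (cmod (\<psi> t0 x))\<^sup>2))"
      unfolding S_def
    proof (rule sum_mono)
      fix x assume "x \<in> Set"
      hence "\<bar>real_of_int (x - x0)\<bar> / t0 \<le> 1" using t0pos by (simp add: Set_def)
      hence "exp (-1) \<le> w x" unfolding w_def by simp
      hence "exp 1 * exp (-1) \<le> exp 1 * w x" by simp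
      hence "1 \<le> exp 1 * w x" by (simp add: exp_minus)
      thus "(cmod (\<psi> t0 x))\<^sup>2 \<le> exp 1 * (w x * (cmod (\<psi> t0 x))\<^sup>2)"
        using mult_right_mono[of 1 "exp 1 * w x" "(cmod (\<psi> t0 x))\<^sup>2"] by (simp add: mult.assoc)
    qed
    also have "\<dots> = exp 1 * (\<Sum>x\<in>Set. w x * (cmod (\<psi> t0 x))\<^sup>2)" by (simp add: sum_distrib_left)
    also have "\<dots> \<le> exp 1 * Ms N"
      unfolding Ms_def by (intro mult_left_mono sum_mono2[OF fin sub]) (auto simp: wnn)
    also have "\<dots> \<le> exp 1 * F N" using MF[of N] by simp
    finally show "S / exp 1 \<le> F N" by (simp add: field_simps)
  qed
  hence "S \<le> exp 1 * Y" by (simp add: field_simps)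
  hence "(1/t0) * S \<le> (1/t0) * (exp 1 * Y)" using t0pos by (intro mult_left_mono) auto
  also have "\<dots> = C * A\<^sup>2" using t0pos
    by (simp add: Y_def Ec_def C_def exp_add field_simps)
  finally have P2: "(1/t0) * S \<le> C * A\<^sup>2" .
  show "cmod (\<psi> t0 x0) \<le> 4*exp(2*exp 1 + 1) * A * sqrt t0 \<and>
        (1 / t0) * (\<Sum>x\<in>{x::int. \<bar>real_of_int (x - x0)\<bar> \<le> t0}. (cmod (\<psi> t0 x))\<^sup>2)
          \<le> 4*exp(2*exp 1 + 1) * A\<^sup>2"
    using P1 P2 by (simp add: C_def S_def Set_def)
qed

end
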